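(* For every $A\subset\Omega$, $$\overline{F_A}=\{\phi\in\mathcal H:\phi_\pi\in\overline{F_A\cap\mathcal H_\pi}\}=\overline{F_A\cap\mathcal H_\pi}\oplus\mathcal H_\pi^\perp,$$ $$F_A^\perp=(F_A\cap\mathcal H_\pi)^\perp\cap\mathcal H_\pi,$$ and $$\overline{F_A}\cap\mathcal H_\pi=\overline{F_A\cap\mathcal H_\pi}.$$
   Context: Let $\mathcal H$ be a complex Hilbert space; $\overline V$ is the closure of $V\subset\mathcal H$. A projection is a bounded self-adjoint idempotent operator; $\wedge_\alpha p_\alpha$ is the projection onto the intersection of ranges. Let $S$ be a set; for each $t\in S$ let $\Gamma(t)$ be a countable set and for $a\in\Gamma(t)$ let $p^t_a$ be a projection on $\mathcal H$ with $\sum_{a\in\Gamma(t)}p^t_a=I$ (strong convergence). Let $\pi=\{p^t_a\}$ and $p^{t_1,\dots,t_k}_{a_1,\dots,a_k}=\wedge_{i=1}^kp^{t_i}_{a_i}$. $\pi$ commutes on $\phi$ if $W\phi=V\phi$ whenever $W,V$ are finite products of elements of $\pi$ with the same factors (with multiplicity) in possibly different orders; $\mathcal H_\pi$ is the closed subspace of such $\phi$, $p_\pi$ its projection, $\phi_\pi=p_\pi\phi$. Let $\Omega=\prod_{t\in S}\Gamma(t)$. For $A\subset\Omega$, $F_A=\{\phi\in\mathcal H:$ for every $\omega\in A$ there are $t_1,\dots,t_k\in S$ with $p^{t_1,\dots,t_k}_{\omega_{t_1},\dots,\omega_{t_k}}\phi=0\}$ (a vector space). *)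

theory Defs
  imports "HOL-Analysis.Analysis" "HOL-Library.Multiset"
begin

text \<open>A complex Hilbert space is modelled as a real Hilbert space (type class
  real_inner + complete_space) with a complex structure J (multiplication by i),
  i.e. a real-linear isometric map with J (J x) = - x.  The complex inner product is
  cinner x y = inner x y + i * inner x (J y) (up to convention), so complex
  orthogonality means inner x y = 0 and inner x (J y) = 0.\<close>

definition complex_structure :: "('a::real_inner \<Rightarrow> 'a) \<Rightarrow> bool" where
  "complex_structure J \<longleftrightarrow> linear J \<and> (\<forall>x. J (J x) = - x) \<and> (\<forall>x y. inner (J x) (J y) = inner x y)"

definition orth :: "('a::real_inner \<Rightarrow> 'a) \<Rightarrow> 'a set \<Rightarrow> 'a set" where
  "orth J V = {x. \<forall>y\<in>V. inner x y = 0 \<and> inner x (J y) = 0}"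

definition is_projection :: "('a::real_inner \<Rightarrow> 'a) \<Rightarrow> ('a \<Rightarrow> 'a) \<Rightarrow> bool" where
  "is_projection J p \<longleftrightarrow> bounded_linear p \<and> (\<forall>x. p (J x) = J (p x))
     \<and> (\<forall>x y. inner (p x) y = inner x (p y)) \<and> (\<forall>x. p (p x) = p x)"

definition proj_onto :: "('a::real_inner \<Rightarrow> 'a) \<Rightarrow> 'a set \<Rightarrow> 'a \<Rightarrow> 'a" where
  "proj_onto J V x = (THE y. y \<in> V \<and> x - y \<in> orth J V)"

text \<open>Meet of the projections p t (\<omega> t), t \<in> T: projection onto the intersection of
  their ranges (for T = {} this is the identity).\<close>
definition meet_proj :: "('a::real_inner \<Rightarrow> 'a) \<Rightarrow> ('s \<Rightarrow> 'g \<Rightarrow> 'a \<Rightarrow> 'a) \<Rightarrow> 's set \<Rightarrow> ('s \<Rightarrow> 'g) \<Rightarrow> 'a \<Rightarrow> 'a" where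
  "meet_proj J p T \<omega> = proj_onto J (\<Inter>t\<in>T. range (p t (\<omega> t)))"

definition prod_op :: "('s \<Rightarrow> 'g \<Rightarrow> 'a \<Rightarrow> 'a) \<Rightarrow> ('s \<times> 'g) list \<Rightarrow> 'a \<Rightarrow> 'a" where
  "prod_op p xs = foldr (\<lambda>(t,a) f. p t a \<circ> f) xs id"

definition commutes_on :: "('s \<Rightarrow> 'g \<Rightarrow> 'a \<Rightarrow> 'a) \<Rightarrow> 's set \<Rightarrow> ('s \<Rightarrow> 'g set) \<Rightarrow> 'a \<Rightarrow> bool" where
  "commutes_on p S \<Gamma> \<phi> \<longleftrightarrow> (\<forall>xs ys. set xs \<subseteq> Sigma S \<Gamma> \<longrightarrow> mset xs = mset ys \<longrightarrow>
      prod_op p xs \<phi> = prod_op p ys \<phi>)"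

definition H_pi :: "('s \<Rightarrow> 'g \<Rightarrow> 'a \<Rightarrow> 'a) \<Rightarrow> 's set \<Rightarrow> ('s \<Rightarrow> 'g set) \<Rightarrow> 'a set" where
  "H_pi p S \<Gamma> = {\<phi>. commutes_on p S \<Gamma> \<phi>}"

definition F_set :: "('a::real_inner \<Rightarrow> 'a) \<Rightarrow> ('s \<Rightarrow> 'g \<Rightarrow> 'a \<Rightarrow> 'a) \<Rightarrow> 's set \<Rightarrow> ('s \<Rightarrow> 'g) set \<Rightarrow> 'a set" where
  "F_set J p S A = {\<phi>. \<forall>\<omega>\<in>A. \<exists>T. finite T \<and> T \<subseteq> S \<and> meet_proj J p T \<omega> \<phi> = 0}"

end

theory Submission
  imports Defs
begin

definition orth0 :: "'a::real_inner set \<Rightarrow> 'a set" where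
  "orth0 V = {x. \<forall>y\<in>V. inner x y = 0}"

lemma orth0_closed: "closed (orth0 V)"
proof -
  have "orth0 V = (\<Inter>y\<in>V. {x. inner x y = 0})" by (auto simp: orth0_def)
  moreover have "closed {x. inner x y = (0::real)}" for y :: 'a
    by (rule closed_Collect_eq) (auto intro!: continuous_intros)
  ultimately show ?thesis by auto
qed

lemma orth0_subspace: "subspace (orth0 V)"
  by (auto simp: subspace_def orth0_def inner_add_left)

lemma orth0_anti: "U \<subseteq> V \<Longrightarrow> orth0 V \<subseteq> orth0 U"
  by (auto simp: orth0_def)

lemma parallelogram:
  fixes a b :: "'a::real_inner"
  shows "(norm (a + b))\<^sup>2 + (norm (a - b))\<^sup>2 = 2 * (norm a)\<^sup>2 + 2 * (norm b)\<^sup>2"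
  by (simp add: power2_norm_eq_inner inner_add_left inner_add_right inner_diff_left inner_diff_right inner_commute)

lemma subspace_closure_lem:
  fixes V :: "'a::real_normed_vector set"
  assumes "subspace V" shows "subspace (closure V)"
  unfolding subspace_def
proof (intro conjI ballI allI)
  show "0 \<in> closure V" using assms subspace_0 closure_subset by blast
next
  fix x y assume "x \<in> closure V" "y \<in> closure V"
  then obtain f g where f: "\<forall>n. f n \<in> V" "f \<longlonglongrightarrow> x" and g: "\<forall>n. g n \<in> V" "g \<longlonglongrightarrow> y"
    by (meson closure_sequential)
  have "(\<lambda>n. f n + g n) \<longlonglongrightarrow> x + y" using f g by (intro tendsto_intros)
  moreover have "\<forall>n. f n + g n \<in> V" using f g assms subspace_add by blast
  ultimately show "x + y \<in> closure V" by (meson closure_sequential)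
next
  fix c :: real and x assume "x \<in> closure V"
  then obtain f where f: "\<forall>n. f n \<in> V" "f \<longlonglongrightarrow> x"
    by (meson closure_sequential)
  have "(\<lambda>n. c *\<^sub>R f n) \<longlonglongrightarrow> c *\<^sub>R x" using f by (intro tendsto_intros)
  moreover have "\<forall>n. c *\<^sub>R f n \<in> V" using f assms subspace_scale by blast
  ultimately show "c *\<^sub>R x \<in> closure V" by (meson closure_sequential)
qed

lemma proj_exists:
  fixes M :: "'a::{real_inner,complete_space} set"
  assumes sM: "subspace M" and cM: "closed M"
  shows "\<exists>y\<in>M. x - y \<in> orth0 M"
proof -
  have ne: "M \<noteq> {}" using sM subspace_0 by blast
  define d where "d = infdist x M"
  have d0: "0 \<le> d" by (simp add: d_def infdist_nonneg)
  have dle: "\<And>m. m \<in> M \<Longrightarrow> d \<le> norm (x - m)" using infdist_le dist_norm d_def by metis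
  have "\<exists>m\<in>M. (norm (x - m))\<^sup>2 < d\<^sup>2 + inverse (real (Suc n))" for n
  proof -
    have "d < sqrt (d\<^sup>2 + inverse (real (Suc n)))"
    proof -
      have "sqrt (d\<^sup>2) < sqrt (d\<^sup>2 + inverse (real (Suc n)))"
        by (intro real_sqrt_less_mono) simp
      then show ?thesis using d0 by simp
    qed
    then have "(INF a\<in>M. dist x a) < sqrt (d\<^sup>2 + inverse (real (Suc n)))"
      using ne by (simp add: d_def infdist_notempty)
    then obtain m where m: "m \<in> M" "dist x m < sqrt (d\<^sup>2 + inverse (real (Suc n)))"
      using ne by (subst (asm) cINF_less_iff) auto
    have "(norm (x - m))\<^sup>2 < (sqrt (d\<^sup>2 + inverse (real (Suc n))))\<^sup>2"
      using m(2) by (intro power_strict_mono) (auto simp: dist_norm)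
    also have "\<dots> = d\<^sup>2 + inverse (real (Suc n))" by (simp add: add_nonneg_nonneg)
    finally show ?thesis using m(1) by blast
  qed
  then obtain m where mM: "\<And>n. m n \<in> M" and mlt: "\<And>n. (norm (x - m n))\<^sup>2 < d\<^sup>2 + inverse (real (Suc n))"
    by metis
  have par: "(norm (m n - m k))\<^sup>2 \<le> 2 * inverse (real (Suc n)) + 2 * inverse (real (Suc k))" for n k
  proof -
    have mid: "(1/2) *\<^sub>R (m n + m k) \<in> M" using mM sM by (simp add: subspace_add subspace_scale)
    have "x - m n + (x - m k) = 2 *\<^sub>R (x - (1/2) *\<^sub>R (m n + m k))"
      by (simp add: scaleR_add_right scaleR_diff_right algebra_simps scaleR_2)
    then have "(norm (x - m n + (x - m k)))\<^sup>2 = 4 * (norm (x - (1/2) *\<^sub>R (m n + m k)))\<^sup>2"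
      by (simp add: power_mult_distrib)
    moreover have "d\<^sup>2 \<le> (norm (x - (1/2) *\<^sub>R (m n + m k)))\<^sup>2"
      using dle[OF mid] d0 by (simp add: power_mono)
    moreover have "(norm (x - m n - (x - m k)))\<^sup>2 = (norm (m n - m k))\<^sup>2"
    proof -
      have "x - m n - (x - m k) = - (m n - m k)" by simp
      then show ?thesis by (simp only: norm_minus_cancel)
    qed
    ultimately show ?thesis using parallelogram[of "x - m n" "x - m k"] mlt[of n] mlt[of k] by linarith
  qed
  have "Cauchy m"
  proof (rule metric_CauchyI)
    fix e :: real assume e: "e > 0"
    obtain N :: nat where N: "4 / e\<^sup>2 < real N" using reals_Archimedean2 by blast
    have "\<forall>n\<ge>N. \<forall>k\<ge>N. dist (m n) (m k) < e"
    proof (intro allI impI)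
      fix n k assume nk: "N \<le> n" "N \<le> k"
      have e2: "e\<^sup>2 > 0" using e by simp
      have iN: "inverse (real (Suc N)) < e\<^sup>2 / 4"
      proof -
        have "4 / e\<^sup>2 < real (Suc N)" using N by simp
        then have "4 < real (Suc N) * e\<^sup>2" using e2 by (simp add: divide_less_eq)
        then show ?thesis using e2 by (simp add: inverse_eq_divide divide_less_eq mult.commute)
      qed
      have "inverse (real (Suc n)) \<le> inverse (real (Suc N))" using nk by (simp add: le_imp_inverse_le)
      moreover have "inverse (real (Suc k)) \<le> inverse (real (Suc N))" using nk by (simp add: le_imp_inverse_le)
      ultimately have "(norm (m n - m k))\<^sup>2 < e\<^sup>2" using par[of n k] iN by linarith
      then have "norm (m n - m k) < e" using e by (meson abs_of_nonneg norm_ge_zero power_less_imp_less_base less_le)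
      then show "dist (m n) (m k) < e" by (simp add: dist_norm)
    qed
    then show "\<exists>N. \<forall>n\<ge>N. \<forall>k\<ge>N. dist (m n) (m k) < e" by blast
  qed
  then obtain y where y: "m \<longlonglongrightarrow> y" using Cauchy_convergent_iff convergent_def by blast
  have yM: "y \<in> M" using closed_sequentially[OF cM] mM y by blast
  have "(\<lambda>n. (norm (x - m n))\<^sup>2) \<longlonglongrightarrow> (norm (x - y))\<^sup>2" using y by (intro tendsto_intros)
  moreover have "(\<lambda>n. d\<^sup>2 + inverse (real (Suc n))) \<longlonglongrightarrow> d\<^sup>2 + 0"
    by (intro tendsto_intros LIMSEQ_inverse_real_of_nat)
  ultimately have ny: "(norm (x - y))\<^sup>2 \<le> d\<^sup>2"
    using mlt by (intro LIMSEQ_le[where X="\<lambda>n. (norm (x - m n))\<^sup>2"]) (auto intro: less_imp_le)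
  have "inner (x - y) z = 0" if zM: "z \<in> M" for z
  proof -
    define i where "i = inner (x - y) z"
    define s where "s = inner z z"
    have s0: "s \<ge> 0" by (simp add: s_def)
    have key: "2 * c * i \<le> c * c * s" for c
    proof -
      have "y + c *\<^sub>R z \<in> M" using yM zM sM by (simp add: subspace_add subspace_scale)
      then have "d\<^sup>2 \<le> (norm (x - (y + c *\<^sub>R z)))\<^sup>2" using dle d0 by (simp add: power_mono)
      also have "(norm (x - (y + c *\<^sub>R z)))\<^sup>2 = (norm (x - y))\<^sup>2 - 2 * c * i + c * c * s"
        by (simp add: power2_norm_eq_inner i_def s_def inner_diff_left inner_diff_right inner_add_left inner_add_right inner_commute algebra_simps)
      finally show ?thesis using ny by linarith
    qed
    define q where "q = i / (s + 1)"
    have qi: "q * (s + 1) = i" using s0 by (simp add: q_def)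
    have "2 * q * i \<le> q * q * s" by (rule key)
    then have "(2 * q * i) * ((s+1)*(s+1)) \<le> (q * q * s) * ((s+1)*(s+1))"
      by (rule mult_right_mono) simp
    moreover have "(2 * q * i) * ((s+1)*(s+1)) = 2 * i * i * (s + 1)"
      using qi by (metis mult.commute mult.left_commute)
    moreover have "(q * q * s) * ((s+1)*(s+1)) = i * i * s"
      using qi by (metis mult.commute mult.left_commute)
    ultimately have "2 * i * i * (s + 1) \<le> i * i * s" by simp
    then have "i * i * (s + 2) \<le> 0" by (simp add: algebra_simps)
    moreover have "i * i \<ge> 0" by simp
    ultimately have "i * i = 0"
    proof -
      assume a: "i * i * (s + 2) \<le> 0" "i * i \<ge> 0"
      show "i * i = 0"
      proof (rule ccontr)
        assume "i * i \<noteq> 0"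
        then have "i * i > 0" using a(2) by linarith
        moreover have "s + 2 > 0" using s0 by simp
        ultimately have "i * i * (s + 2) > 0" by (rule mult_pos_pos)
        then show False using a(1) by simp
      qed
    qed
    then show ?thesis by (simp add: i_def)
  qed
  then show ?thesis using yM by (auto simp: orth0_def)
qed


definition pr :: "'a::real_inner set \<Rightarrow> 'a \<Rightarrow> 'a" where
  "pr M x = (THE y. y \<in> M \<and> x - y \<in> orth0 M)"

context
  fixes M :: "'a::{real_inner,complete_space} set"
  assumes sM: "subspace M" and cM: "closed M"
begin

lemma pr_unique: "y \<in> M \<Longrightarrow> x - y \<in> orth0 M \<Longrightarrow> pr M x = y"
  unfolding pr_def
proof (rule the_equality)
  fix y' assume y: "y \<in> M" "x - y \<in> orth0 M" and y': "y' \<in> M \<and> x - y' \<in> orth0 M"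
  have "y' - y \<in> M" using y y' sM by (simp add: subspace_diff)
  moreover have "(x - y) - (x - y') \<in> orth0 M" using y y' orth0_subspace by (blast intro: subspace_diff)
  moreover have "(x - y) - (x - y') = y' - y" by simp
  ultimately have "inner (y' - y) (y' - y) = 0" by (auto simp: orth0_def)
  then show "y' = y" by simp
qed auto

lemma pr_props: "pr M x \<in> M \<and> x - pr M x \<in> orth0 M"
proof -
  obtain y where "y \<in> M" "x - y \<in> orth0 M" using proj_exists[OF sM cM] by blast
  then show ?thesis using pr_unique by simp
qed

lemma pr_in: "pr M x \<in> M" using pr_props by blast
lemma pr_orth: "x - pr M x \<in> orth0 M" using pr_props by blast

lemma pr_id: "x \<in> M \<Longrightarrow> pr M x = x"
  by (rule pr_unique) (auto simp: orth0_def)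

lemma pr_zero_iff: "pr M x = 0 \<longleftrightarrow> x \<in> orth0 M"
  using pr_orth[of x] pr_unique[of 0 x] sM subspace_0 by force

lemma pr_selfadj: "inner (pr M x) y = inner x (pr M y)"
proof -
  have a: "inner (pr M x) (y - pr M y) = 0" using pr_orth[of y] pr_in[of x]
    by (auto simp: orth0_def inner_commute)
  have b: "inner (x - pr M x) (pr M y) = 0" using pr_orth[of x] pr_in[of y]
    by (auto simp: orth0_def)
  show ?thesis using a b by (simp add: inner_diff_left inner_diff_right)
qed

lemma pr_bl: "bounded_linear (pr M)"
proof (rule bounded_linear_intro[where K=1])
  fix x y
  show "pr M (x + y) = pr M x + pr M y"
  proof (rule pr_unique)
    show "pr M x + pr M y \<in> M" using pr_in sM by (simp add: subspace_add)
    have "(x - pr M x) + (y - pr M y) \<in> orth0 M" using pr_orth orth0_subspace by (blast intro: subspace_add)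
    then show "x + y - (pr M x + pr M y) \<in> orth0 M" by (simp add: algebra_simps)
  qed
next
  fix r :: real and x
  show "pr M (r *\<^sub>R x) = r *\<^sub>R pr M x"
  proof (rule pr_unique)
    show "r *\<^sub>R pr M x \<in> M" using pr_in sM by (simp add: subspace_scale)
    have "r *\<^sub>R (x - pr M x) \<in> orth0 M" using pr_orth orth0_subspace by (blast intro: subspace_scale)
    then show "r *\<^sub>R x - r *\<^sub>R pr M x \<in> orth0 M" by (simp add: algebra_simps)
  qed
next
  fix x
  have o: "inner (pr M x) (x - pr M x) = 0" using pr_orth[of x] pr_in[of x]
    by (auto simp: orth0_def inner_commute)
  have "(norm x)\<^sup>2 = (norm (pr M x))\<^sup>2 + (norm (x - pr M x))\<^sup>2"
  proof -
    have o': "inner (pr M x) x = inner (pr M x) (pr M x)" using o by (simp add: inner_diff_right)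
    then have o'': "inner x (pr M x) = inner (pr M x) (pr M x)" by (simp add: inner_commute)
    show ?thesis by (simp add: power2_norm_eq_inner inner_diff_left inner_diff_right o' o'')
  qed
  then have "(norm (pr M x))\<^sup>2 \<le> (norm x)\<^sup>2" by simp
  then have "norm (pr M x) \<le> norm x" by (rule power2_le_imp_le) simp
  then show "norm (pr M x) \<le> norm x * 1" by simp
qed

end

lemma orth0_orth0:
  fixes V :: "'a::{real_inner,complete_space} set"
  assumes "subspace V" shows "orth0 (orth0 V) \<subseteq> closure V"
proof
  fix x assume x: "x \<in> orth0 (orth0 V)"
  let ?C = "closure V"
  have sC: "subspace ?C" using subspace_closure_lem[OF assms] .
  have cC: "closed ?C" by simp
  let ?y = "pr ?C x"
  have "x - ?y \<in> orth0 ?C" using pr_orth[OF sC cC] .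
  then have xy: "x - ?y \<in> orth0 V" using orth0_anti[OF closure_subset] by blast
  then have "inner x (x - ?y) = 0" using x by (auto simp: orth0_def)
  moreover have "inner (x - ?y) ?y = 0" using pr_in[OF sC cC, of x] \<open>x - ?y \<in> orth0 ?C\<close>
    by (auto simp: orth0_def)
  ultimately have "inner (x - ?y) (x - ?y) = 0"
    by (simp add: inner_diff_left inner_diff_right inner_commute)
  then have "x = ?y" by simp
  then show "x \<in> ?C" using pr_in[OF sC cC, of x] by simp
qed

lemma orth_eq_orth0:
  assumes "\<And>y. y \<in> M \<Longrightarrow> J y \<in> M"
  shows "orth J M = orth0 M"
  using assms by (auto simp: orth_def orth0_def)


lemma prod_Nil[simp]: "prod_op p [] = id" by (simp add: prod_op_def)
lemma prod_Cons[simp]: "prod_op p ((t,a)#xs) = p t a \<circ> prod_op p xs" by (simp add: prod_op_def)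

lemma prod_append: "prod_op p (xs @ ys) = prod_op p xs \<circ> prod_op p ys"
  by (induction xs) (auto simp: comp_assoc)

locale l2ctx =
  fixes J :: "'a::{real_inner, complete_space} \<Rightarrow> 'a"
    and S :: "'s set" and \<Gamma> :: "'s \<Rightarrow> 'g set"
    and p :: "'s \<Rightarrow> 'g \<Rightarrow> 'a \<Rightarrow> 'a"
    and A :: "('s \<Rightarrow> 'g) set"
  assumes J: "complex_structure J"
    and proj: "\<And>t a. t \<in> S \<Longrightarrow> a \<in> \<Gamma> t \<Longrightarrow> is_projection J (p t a)"
    and resolution: "\<And>t \<phi>. t \<in> S \<Longrightarrow> ((\<lambda>a. p t a \<phi>) has_sum \<phi>) (\<Gamma> t)"
    and A: "A \<subseteq> (\<Pi>\<^sub>E t\<in>S. \<Gamma> t)"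
begin

lemma J_lin: "linear J" using J by (simp add: complex_structure_def)
lemma J_J: "J (J x) = - x" using J by (simp add: complex_structure_def)
lemma J_inner: "inner (J x) y = - inner x (J y)"
proof -
  have "inner (J x) y = inner (J x) (J (J (- y)))" using J_J[of "-y"] by simp
  also have "\<dots> = inner x (J (- y))" using J unfolding complex_structure_def by blast
  also have "J (- y) = - J y" using J_lin by (rule linear_neg)
  finally show ?thesis by simp
qed

context fixes t a assumes ta: "t \<in> S" "a \<in> \<Gamma> t"
begin
lemma p_bl: "bounded_linear (p t a)" using proj[OF ta] by (simp add: is_projection_def)
lemma p_J: "p t a (J x) = J (p t a x)" using proj[OF ta] by (simp add: is_projection_def)
lemma p_adj: "inner (p t a x) y = inner x (p t a y)" using proj[OF ta] by (simp add: is_projection_def)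
lemma p_idem: "p t a (p t a x) = p t a x" using proj[OF ta] by (simp add: is_projection_def)
lemma p_add: "p t a (x + y) = p t a x + p t a y" using bounded_linear.linear[OF p_bl] by (rule linear_add)
lemma p_diff: "p t a (x - y) = p t a x - p t a y" using bounded_linear.linear[OF p_bl] by (rule linear_diff)
lemma p_scale: "p t a (c *\<^sub>R x) = c *\<^sub>R p t a x" using bounded_linear.linear[OF p_bl] by (rule linear_scale)
lemma p_zero: "p t a 0 = 0" using bounded_linear.linear[OF p_bl] by (rule linear_0)
lemma p_cont: "continuous_on X (p t a)" using p_bl by (simp add: linear_continuous_on)
lemma p_sq: "inner (p t a m) m = inner (p t a m) (p t a m)"
  by (metis p_adj p_idem)
end

lemma p_ortho:
  assumes t: "t \<in> S" and a: "a \<in> \<Gamma> t" and b: "b \<in> \<Gamma> t" and ab: "a \<noteq> b" and m: "p t b m = m"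
  shows "p t a m = 0"
proof -
  define g where "g c = inner (p t c m) m" for c
  have hs: "(g has_sum inner m m) (\<Gamma> t)"
    unfolding g_def using has_sum_bounded_linear[OF bounded_linear_inner_left resolution[OF t]] .
  have fin: "(g has_sum (g a + g b)) {a, b}" using ab by (simp add: has_sum_finite_iff)
  have "g a + g b \<le> inner m m"
  proof (rule has_sum_mono_neutral[OF fin hs])
    show "\<And>x. x \<in> {a, b} - \<Gamma> t \<Longrightarrow> g x \<le> 0" using a b by auto
    show "\<And>x. x \<in> \<Gamma> t - {a, b} \<Longrightarrow> 0 \<le> g x" using t by (auto simp: g_def p_sq)
  qed auto
  moreover have "g b = inner m m" using m by (simp add: g_def)
  ultimately have "g a \<le> 0" by simp
  moreover have "g a = inner (p t a m) (p t a m)" using t a by (simp add: g_def p_sq)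
  ultimately have "inner (p t a m) (p t a m) = 0" by (metis inner_ge_zero order_antisym)
  then show ?thesis by simp
qed

definition Mt :: "'s set \<Rightarrow> ('s \<Rightarrow> 'g) \<Rightarrow> 'a set" where
  "Mt T \<omega> = (\<Inter>t\<in>T. range (p t (\<omega> t)))"

definition good :: "'s set \<Rightarrow> ('s \<Rightarrow> 'g) \<Rightarrow> bool" where
  "good T \<omega> \<longleftrightarrow> (\<forall>t\<in>T. t \<in> S \<and> \<omega> t \<in> \<Gamma> t)"

lemma good_A: "\<omega> \<in> A \<Longrightarrow> T \<subseteq> S \<Longrightarrow> good T \<omega>"
  using A by (auto simp: good_def PiE_iff)

lemma Mt_mem: "good T \<omega> \<Longrightarrow> m \<in> Mt T \<omega> \<longleftrightarrow> (\<forall>t\<in>T. p t (\<omega> t) m = m)"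
  unfolding Mt_def good_def by (auto simp: image_iff p_idem intro: sym)

lemma Mt_sub: "good T \<omega> \<Longrightarrow> subspace (Mt T \<omega>)"
  unfolding subspace_def
proof (intro conjI ballI allI)
  assume g: "good T \<omega>"
  show "0 \<in> Mt T \<omega>" using g by (simp add: Mt_mem good_def p_zero)
  show "x + y \<in> Mt T \<omega>" if "x \<in> Mt T \<omega>" "y \<in> Mt T \<omega>" for x y
    using g that by (simp add: Mt_mem good_def p_add)
  show "c *\<^sub>R x \<in> Mt T \<omega>" if "x \<in> Mt T \<omega>" for c x
    using g that by (simp add: Mt_mem good_def p_scale)
qed

lemma Mt_closed: "good T \<omega> \<Longrightarrow> closed (Mt T \<omega>)"
proof -
  assume g: "good T \<omega>"
  then have "Mt T \<omega> = (\<Inter>t\<in>T. {x. p t (\<omega> t) x = id x})" by (auto simp: Mt_mem)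
  moreover have "closed {x. p t (\<omega> t) x = id x}" if "t \<in> T" for t
    using g that by (intro closed_Collect_eq) (auto simp: good_def p_cont)
  ultimately show ?thesis by auto
qed

lemma Mt_J: "good T \<omega> \<Longrightarrow> m \<in> Mt T \<omega> \<Longrightarrow> J m \<in> Mt T \<omega>"
  by (auto simp: Mt_mem good_def p_J)

lemma Mt_anti: "T1 \<subseteq> T2 \<Longrightarrow> Mt T2 \<omega> \<subseteq> Mt T1 \<omega>"
  by (auto simp: Mt_def)

lemma meet_eq: "good T \<omega> \<Longrightarrow> meet_proj J p T \<omega> = pr (Mt T \<omega>)"
proof -
  assume g: "good T \<omega>"
  have "orth J (Mt T \<omega>) = orth0 (Mt T \<omega>)" using Mt_J[OF g] by (rule orth_eq_orth0)
  then show ?thesis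
    by (simp add: meet_proj_def proj_onto_def pr_def Mt_def fun_eq_iff)
qed

lemma F_char: "\<phi> \<in> F_set J p S A \<longleftrightarrow> (\<forall>\<omega>\<in>A. \<exists>T. finite T \<and> T \<subseteq> S \<and> \<phi> \<in> orth0 (Mt T \<omega>))"
proof -
  have "meet_proj J p T \<omega> \<phi> = 0 \<longleftrightarrow> \<phi> \<in> orth0 (Mt T \<omega>)" if "\<omega> \<in> A" "T \<subseteq> S" for T \<omega>
  proof -
    have g: "good T \<omega>" using good_A that .
    show ?thesis using meet_eq[OF g] pr_zero_iff[OF Mt_sub[OF g] Mt_closed[OF g]] by simp
  qed
  then show ?thesis by (simp add: F_set_def cong: conj_cong)
qed

end

context l2ctx begin

lemma prod_bl: "set xs \<subseteq> Sigma S \<Gamma> \<Longrightarrow> bounded_linear (prod_op p xs)"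
proof (induction xs)
  case Nil then show ?case by (simp add: id_def bounded_linear_ident)
next
  case (Cons x xs)
  obtain t a where x: "x = (t,a)" by fastforce
  then have ta: "t \<in> S" "a \<in> \<Gamma> t" using Cons.prems by auto
  have "bounded_linear (p t a \<circ> prod_op p xs)"
    using Cons ta by (intro bounded_linear_compose[OF p_bl, unfolded o_def[symmetric]]) auto
  then show ?case using x by (simp add: o_def)
qed

lemma prod_J: "set xs \<subseteq> Sigma S \<Gamma> \<Longrightarrow> prod_op p xs (J x) = J (prod_op p xs x)"
  by (induction xs) (auto simp: p_J)

lemma prod_adj: "set xs \<subseteq> Sigma S \<Gamma> \<Longrightarrow> inner (prod_op p xs x) y = inner x (prod_op p (rev xs) y)"
proof (induction xs arbitrary: y)
  case Nil then show ?case by simp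
next
  case (Cons z xs)
  obtain t a where z: "z = (t,a)" by fastforce
  then have ta: "t \<in> S" "a \<in> \<Gamma> t" using Cons.prems by auto
  have "inner (prod_op p (z#xs) x) y = inner (prod_op p xs x) (p t a y)"
    using z ta by (simp add: p_adj)
  also have "\<dots> = inner x (prod_op p (rev xs) (p t a y))" using Cons by simp
  also have "\<dots> = inner x (prod_op p (rev (z#xs)) y)" using z by (simp add: prod_append)
  finally show ?case .
qed

lemma prod_M:
  assumes g: "good T \<omega>" and m: "m \<in> Mt T \<omega>"
  shows "set xs \<subseteq> Sigma S \<Gamma> \<Longrightarrow> fst ` set xs \<subseteq> T \<Longrightarrow>
    prod_op p xs m = (if (\<forall>z\<in>set xs. snd z = \<omega> (fst z)) then m else 0)"
proof (induction xs)
  case Nil then show ?case by simp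
next
  case (Cons z xs)
  obtain t a where z: "z = (t,a)" by fastforce
  then have ta: "t \<in> S" "a \<in> \<Gamma> t" "t \<in> T" using Cons.prems by auto
  have IH: "prod_op p xs m = (if (\<forall>z\<in>set xs. snd z = \<omega> (fst z)) then m else 0)"
    using Cons by auto
  have pm: "p t (\<omega> t) m = m" using m g ta by (simp add: Mt_mem)
  have wt: "\<omega> t \<in> \<Gamma> t" using g ta by (simp add: good_def)
  show ?case
  proof (cases "\<forall>z\<in>set xs. snd z = \<omega> (fst z)")
    case True
    show ?thesis
    proof (cases "a = \<omega> t")
      case True then show ?thesis using IH \<open>\<forall>z\<in>set xs. snd z = \<omega> (fst z)\<close> z pm by simp
    next
      case False
      have "p t a m = 0" by (rule p_ortho[OF ta(1) ta(2) wt False pm])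
      then show ?thesis using IH True z False by simp
    qed
  next
    case False
    then show ?thesis using IH z ta by (auto simp: p_zero)
  qed
qed

definition HH where "HH = H_pi p S \<Gamma>"

lemma H_mem: "\<phi> \<in> HH \<longleftrightarrow> (\<forall>xs ys. set xs \<subseteq> Sigma S \<Gamma> \<longrightarrow> mset xs = mset ys \<longrightarrow>
      prod_op p xs \<phi> = prod_op p ys \<phi>)"
  by (simp add: HH_def H_pi_def commutes_on_def)

lemma ys_sub: "set xs \<subseteq> Sigma S \<Gamma> \<Longrightarrow> mset xs = mset ys \<Longrightarrow> set ys \<subseteq> Sigma S \<Gamma>"
  by (metis set_mset_mset)

lemma prod_lin: "set xs \<subseteq> Sigma S \<Gamma> \<Longrightarrow> linear (prod_op p xs)"
  using prod_bl bounded_linear.linear by blast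

lemma H_sub: "subspace HH"
  unfolding subspace_def
proof (intro conjI ballI allI)
  show "0 \<in> HH" unfolding H_mem
  proof (intro allI impI)
    fix xs ys assume "set xs \<subseteq> Sigma S \<Gamma>" "mset xs = mset ys"
    then have "linear (prod_op p xs)" "linear (prod_op p ys)" using prod_lin ys_sub by blast+
    then show "prod_op p xs 0 = prod_op p ys 0" by (simp add: linear_0)
  qed
next
  fix x y assume x: "x \<in> HH" and y: "y \<in> HH"
  show "x + y \<in> HH" unfolding H_mem
  proof (intro allI impI)
    fix xs ys assume a: "set xs \<subseteq> Sigma S \<Gamma>" "mset xs = mset ys"
    then have "linear (prod_op p xs)" "linear (prod_op p ys)" using prod_lin ys_sub by blast+
    moreover have "prod_op p xs x = prod_op p ys x" "prod_op p xs y = prod_op p ys y"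
      using x y a unfolding H_mem by blast+
    ultimately show "prod_op p xs (x + y) = prod_op p ys (x + y)" by (simp add: linear_add)
  qed
next
  fix c x assume x: "x \<in> HH"
  show "c *\<^sub>R x \<in> HH" unfolding H_mem
  proof (intro allI impI)
    fix xs ys assume a: "set xs \<subseteq> Sigma S \<Gamma>" "mset xs = mset ys"
    then have "linear (prod_op p xs)" "linear (prod_op p ys)" using prod_lin ys_sub by blast+
    moreover have "prod_op p xs x = prod_op p ys x"
      using x a unfolding H_mem by blast+
    ultimately show "prod_op p xs (c *\<^sub>R x) = prod_op p ys (c *\<^sub>R x)" by (simp add: linear_scale)
  qed
qed

lemma H_closed: "closed HH"
proof -
  have eq: "HH = \<Inter>{{\<phi>. prod_op p xs \<phi> = prod_op p ys \<phi>} | xs ys. set xs \<subseteq> Sigma S \<Gamma> \<and> mset xs = mset ys}"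
  proof
    show "HH \<subseteq> \<Inter>{{\<phi>. prod_op p xs \<phi> = prod_op p ys \<phi>} | xs ys. set xs \<subseteq> Sigma S \<Gamma> \<and> mset xs = mset ys}"
    proof (intro subsetI InterI)
      fix \<phi> X assume h: "\<phi> \<in> HH" and "X \<in> {{\<phi>. prod_op p xs \<phi> = prod_op p ys \<phi>} | xs ys. set xs \<subseteq> Sigma S \<Gamma> \<and> mset xs = mset ys}"
      then obtain xs ys where X: "X = {\<phi>. prod_op p xs \<phi> = prod_op p ys \<phi>}" "set xs \<subseteq> Sigma S \<Gamma>" "mset xs = mset ys"
        by blast
      then show "\<phi> \<in> X" using h unfolding H_mem by blast
    qed
  next
    show "\<Inter>{{\<phi>. prod_op p xs \<phi> = prod_op p ys \<phi>} | xs ys. set xs \<subseteq> Sigma S \<Gamma> \<and> mset xs = mset ys} \<subseteq> HH"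
    proof
      fix \<phi> assume h: "\<phi> \<in> \<Inter>{{\<phi>. prod_op p xs \<phi> = prod_op p ys \<phi>} | xs ys. set xs \<subseteq> Sigma S \<Gamma> \<and> mset xs = mset ys}"
      show "\<phi> \<in> HH" unfolding H_mem
      proof (intro allI impI)
        fix xs ys assume "set xs \<subseteq> Sigma S \<Gamma>" "mset xs = mset ys"
        then have "{\<phi>. prod_op p xs \<phi> = prod_op p ys \<phi>} \<in> {{\<phi>. prod_op p xs \<phi> = prod_op p ys \<phi>} | xs ys. set xs \<subseteq> Sigma S \<Gamma> \<and> mset xs = mset ys}"
          by blast
        from InterD[OF h this] show "prod_op p xs \<phi> = prod_op p ys \<phi>" by simp
      qed
    qed
  qed
  have cl: "closed {\<phi>. prod_op p xs \<phi> = prod_op p ys \<phi>}" if "set xs \<subseteq> Sigma S \<Gamma>" "mset xs = mset ys" for xs ys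
  proof -
    have ys: "set ys \<subseteq> Sigma S \<Gamma>" using ys_sub that .
    show ?thesis
      by (rule closed_Collect_eq; rule linear_continuous_on; rule prod_bl) (fact that(1), fact ys)
  qed
  have "\<forall>X\<in>{{\<phi>. prod_op p xs \<phi> = prod_op p ys \<phi>} | xs ys. set xs \<subseteq> Sigma S \<Gamma> \<and> mset xs = mset ys}. closed X"
  proof
    fix X assume "X \<in> {{\<phi>. prod_op p xs \<phi> = prod_op p ys \<phi>} | xs ys. set xs \<subseteq> Sigma S \<Gamma> \<and> mset xs = mset ys}"
    then obtain xs ys where X: "X = {\<phi>. prod_op p xs \<phi> = prod_op p ys \<phi>}" "set xs \<subseteq> Sigma S \<Gamma>" "mset xs = mset ys"
      by blast
    show "closed X" unfolding X(1) by (rule cl[OF X(2,3)])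
  qed
  then show ?thesis unfolding eq by (rule closed_Inter)
qed

lemma H_J: "x \<in> HH \<Longrightarrow> J x \<in> HH"
  unfolding H_mem
proof (intro allI impI)
  fix xs ys assume x: "\<forall>xs ys. set xs \<subseteq> Sigma S \<Gamma> \<longrightarrow> mset xs = mset ys \<longrightarrow> prod_op p xs x = prod_op p ys x"
    and a: "set xs \<subseteq> Sigma S \<Gamma>" "mset xs = mset ys"
  have ys: "set ys \<subseteq> Sigma S \<Gamma>" using ys_sub a by blast
  have e: "prod_op p xs x = prod_op p ys x" using x a by blast
  have "prod_op p xs (J x) = J (prod_op p xs x)" using a(1) by (rule prod_J)
  also have "\<dots> = J (prod_op p ys x)" using e by simp
  also have "\<dots> = prod_op p ys (J x)" using ys by (rule prod_J[symmetric])
  finally show "prod_op p xs (J x) = prod_op p ys (J x)" .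
qed

lemma H_inv: "x \<in> HH \<Longrightarrow> t \<in> S \<Longrightarrow> a \<in> \<Gamma> t \<Longrightarrow> p t a x \<in> HH"
  unfolding H_mem
proof (intro allI impI)
  fix xs ys assume x: "\<forall>xs ys. set xs \<subseteq> Sigma S \<Gamma> \<longrightarrow> mset xs = mset ys \<longrightarrow> prod_op p xs x = prod_op p ys x"
    and ta: "t \<in> S" "a \<in> \<Gamma> t" and xs: "set xs \<subseteq> Sigma S \<Gamma>" "mset xs = mset ys"
  have "prod_op p (xs @ [(t,a)]) x = prod_op p (ys @ [(t,a)]) x"
    using x xs ta by (intro x[rule_format]) auto
  then show "prod_op p xs (p t a x) = prod_op p ys (p t a x)" by (simp add: prod_append)
qed

definition PP where "PP = pr HH"

lemma P_in: "PP x \<in> HH" using pr_in[OF H_sub H_closed] by (simp add: PP_def)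
lemma P_orth: "x - PP x \<in> orth0 HH" using pr_orth[OF H_sub H_closed] by (simp add: PP_def)
lemma P_unique: "y \<in> HH \<Longrightarrow> x - y \<in> orth0 HH \<Longrightarrow> PP x = y" using pr_unique[OF H_sub H_closed] by (simp add: PP_def)
lemma P_adj: "inner (PP x) y = inner x (PP y)" using pr_selfadj[OF H_sub H_closed] by (simp add: PP_def)
lemma P_bl: "bounded_linear PP" using pr_bl[OF H_sub H_closed] by (simp add: PP_def)
lemma P_id: "x \<in> HH \<Longrightarrow> PP x = x" using pr_id[OF H_sub H_closed] by (simp add: PP_def)

lemma P_comm: "t \<in> S \<Longrightarrow> a \<in> \<Gamma> t \<Longrightarrow> PP (p t a x) = p t a (PP x)"
proof (rule P_unique)
  assume ta: "t \<in> S" "a \<in> \<Gamma> t"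
  show "p t a (PP x) \<in> HH" using H_inv[OF P_in ta] .
  have "inner (p t a (x - PP x)) h = 0" if "h \<in> HH" for h
  proof -
    have "inner (p t a (x - PP x)) h = inner (x - PP x) (p t a h)" using ta by (simp add: p_adj)
    also have "\<dots> = 0" using P_orth[of x] H_inv[OF that ta] by (auto simp: orth0_def)
    finally show ?thesis .
  qed
  then show "p t a x - p t a (PP x) \<in> orth0 HH" using ta by (simp add: orth0_def p_diff)
qed

lemma proj_PP: "proj_onto J HH = PP"
proof -
  have "orth J HH = orth0 HH" using H_J by (rule orth_eq_orth0)
  then show ?thesis by (simp add: proj_onto_def PP_def pr_def fun_eq_iff)
qed

definition FF where "FF = F_set J p S A"

lemma F_sub: "subspace FF"
  unfolding subspace_def
proof (intro conjI ballI allI)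
  show "0 \<in> FF" unfolding FF_def F_char
    by (auto intro!: exI[of _ "{}"] simp: orth0_def)
next
  fix x y assume x: "x \<in> FF" and y: "y \<in> FF"
  show "x + y \<in> FF" unfolding FF_def F_char
  proof
    fix \<omega> assume w: "\<omega> \<in> A"
    obtain T1 where T1: "finite T1" "T1 \<subseteq> S" "x \<in> orth0 (Mt T1 \<omega>)" using x w unfolding FF_def F_char by blast
    obtain T2 where T2: "finite T2" "T2 \<subseteq> S" "y \<in> orth0 (Mt T2 \<omega>)" using y w unfolding FF_def F_char by blast
    have "x \<in> orth0 (Mt (T1 \<union> T2) \<omega>)" using T1 orth0_anti[OF Mt_anti[of T1 "T1 \<union> T2"]] by blast
    moreover have "y \<in> orth0 (Mt (T1 \<union> T2) \<omega>)" using T2 orth0_anti[OF Mt_anti[of T2 "T1 \<union> T2"]] by blast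
    ultimately have "x + y \<in> orth0 (Mt (T1 \<union> T2) \<omega>)" using orth0_subspace subspace_add by blast
    then show "\<exists>T. finite T \<and> T \<subseteq> S \<and> x + y \<in> orth0 (Mt T \<omega>)" using T1 T2 by blast
  qed
next
  fix c x assume x: "x \<in> FF"
  show "c *\<^sub>R x \<in> FF" unfolding FF_def F_char
  proof
    fix \<omega> assume w: "\<omega> \<in> A"
    obtain T1 where T1: "finite T1" "T1 \<subseteq> S" "x \<in> orth0 (Mt T1 \<omega>)" using x w unfolding FF_def F_char by blast
    then have "c *\<^sub>R x \<in> orth0 (Mt T1 \<omega>)" using orth0_subspace subspace_scale by blast
    then show "\<exists>T. finite T \<and> T \<subseteq> S \<and> c *\<^sub>R x \<in> orth0 (Mt T \<omega>)" using T1 by blast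
  qed
qed

lemma F_J: "x \<in> FF \<Longrightarrow> J x \<in> FF"
  unfolding FF_def F_char
proof
  fix \<omega> assume x: "\<forall>\<omega>\<in>A. \<exists>T. finite T \<and> T \<subseteq> S \<and> x \<in> orth0 (Mt T \<omega>)" and w: "\<omega> \<in> A"
  obtain T where T: "finite T" "T \<subseteq> S" "x \<in> orth0 (Mt T \<omega>)" using x w by blast
  have g: "good T \<omega>" using good_A w T by blast
  have "J x \<in> orth0 (Mt T \<omega>)" using T(3) Mt_J[OF g] by (auto simp: orth0_def J_inner)
  then show "\<exists>T. finite T \<and> T \<subseteq> S \<and> J x \<in> orth0 (Mt T \<omega>)" using T by blast
qed

lemma P_F: "x \<in> FF \<Longrightarrow> PP x \<in> FF"
  unfolding FF_def F_char
proof
  fix \<omega> assume x: "\<forall>\<omega>\<in>A. \<exists>T. finite T \<and> T \<subseteq> S \<and> x \<in> orth0 (Mt T \<omega>)" and w: "\<omega> \<in> A"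
  obtain T where T: "finite T" "T \<subseteq> S" "x \<in> orth0 (Mt T \<omega>)" using x w by blast
  have g: "good T \<omega>" using good_A w T by blast
  have "PP m \<in> Mt T \<omega>" if "m \<in> Mt T \<omega>" for m
    using that g by (auto simp: Mt_mem good_def P_comm[symmetric])
  then have "PP x \<in> orth0 (Mt T \<omega>)" using T(3) by (auto simp: orth0_def P_adj)
  then show "\<exists>T. finite T \<and> T \<subseteq> S \<and> PP x \<in> orth0 (Mt T \<omega>)" using T by blast
qed

lemma key: "orth0 FF \<subseteq> HH"
proof
  fix z assume z: "z \<in> orth0 FF"
  show "z \<in> HH" unfolding H_mem
  proof (intro allI impI)
    fix xs ys assume xs: "set xs \<subseteq> Sigma S \<Gamma>" and e: "mset xs = mset ys"
    have ys: "set ys \<subseteq> Sigma S \<Gamma>" using ys_sub xs e .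
    have se: "set ys = set xs" using e by (metis set_mset_mset)
    define d where "d = prod_op p xs z - prod_op p ys z"
    define u where "u = prod_op p (rev xs) d - prod_op p (rev ys) d"
    let ?T = "fst ` set xs"
    have "u \<in> FF" unfolding FF_def F_char
    proof
      fix \<omega> assume w: "\<omega> \<in> A"
      have TS: "?T \<subseteq> S" using xs by auto
      have g: "good ?T \<omega>" using good_A w TS by blast
      have "u \<in> orth0 (Mt ?T \<omega>)" unfolding orth0_def mem_Collect_eq
      proof
        fix m assume m: "m \<in> Mt ?T \<omega>"
        have "prod_op p xs m = prod_op p ys m"
          using prod_M[OF g m xs] prod_M[OF g m ys] se by simp
        then show "inner u m = 0" unfolding u_def using xs ys
          by (simp add: inner_diff_left prod_adj)
      qed
      then show "\<exists>T. finite T \<and> T \<subseteq> S \<and> u \<in> orth0 (Mt T \<omega>)" using TS by blast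
    qed
    then have "inner z u = 0" using z by (auto simp: orth0_def)
    moreover have "inner z u = inner d d" unfolding u_def d_def using xs ys
      by (simp add: inner_diff_right inner_diff_left prod_adj[symmetric] inner_commute)
    ultimately have "d = 0" by simp
    then show "prod_op p xs z = prod_op p ys z" by (simp add: d_def)
  qed
qed

lemma orthH: "orth0 HH \<subseteq> closure FF"
  using orth0_anti[OF key] orth0_orth0[OF F_sub] by blast

lemma main:
  shows "closure FF = {\<phi>. PP \<phi> \<in> closure (FF \<inter> HH)}
       \<and> closure FF = {x + y | x y. x \<in> closure (FF \<inter> HH) \<and> y \<in> orth J HH}
       \<and> orth J FF = orth J (FF \<inter> HH) \<inter> HH
       \<and> closure FF \<inter> HH = closure (FF \<inter> HH)"
proof -
  have oH: "orth J HH = orth0 HH" using H_J by (rule orth_eq_orth0)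
  have oF: "orth J FF = orth0 FF" using F_J by (rule orth_eq_orth0)
  have oFH: "orth J (FF \<inter> HH) = orth0 (FF \<inter> HH)" using F_J H_J by (intro orth_eq_orth0) auto
  have cl_sub: "subspace (closure FF)" using subspace_closure_lem[OF F_sub] .
  have PFH: "PP x \<in> FF \<inter> HH" if "x \<in> FF" for x using P_F[OF that] P_in by blast
  have cFH: "closure (FF \<inter> HH) \<subseteq> HH" using H_closed by (simp add: closure_minimal)
  have c1: "closure FF = {\<phi>. PP \<phi> \<in> closure (FF \<inter> HH)}"
  proof
    show "closure FF \<subseteq> {\<phi>. PP \<phi> \<in> closure (FF \<inter> HH)}"
    proof -
      have "PP ` closure FF \<subseteq> closure (FF \<inter> HH)"
        by (rule image_closure_subset) (auto intro: linear_continuous_on P_bl closure_subset[THEN subsetD, OF PFH])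
      then show ?thesis by blast
    qed
  next
    show "{\<phi>. PP \<phi> \<in> closure (FF \<inter> HH)} \<subseteq> closure FF"
    proof
      fix \<phi> assume "\<phi> \<in> {\<phi>. PP \<phi> \<in> closure (FF \<inter> HH)}"
      then have a: "PP \<phi> \<in> closure FF" using closure_mono[of "FF \<inter> HH" FF] by blast
      have b: "\<phi> - PP \<phi> \<in> closure FF" using P_orth orthH by blast
      have "PP \<phi> + (\<phi> - PP \<phi>) \<in> closure FF" using a b cl_sub subspace_add by blast
      then show "\<phi> \<in> closure FF" by simp
    qed
  qed
  have c2: "closure FF = {x + y | x y. x \<in> closure (FF \<inter> HH) \<and> y \<in> orth J HH}"
  proof
    show "closure FF \<subseteq> {x + y | x y. x \<in> closure (FF \<inter> HH) \<and> y \<in> orth J HH}"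
    proof
      fix \<phi> assume "\<phi> \<in> closure FF"
      then have "PP \<phi> \<in> closure (FF \<inter> HH)" using c1 by blast
      moreover have "\<phi> - PP \<phi> \<in> orth J HH" using P_orth oH by simp
      moreover have "\<phi> = PP \<phi> + (\<phi> - PP \<phi>)" by simp
      ultimately show "\<phi> \<in> {x + y | x y. x \<in> closure (FF \<inter> HH) \<and> y \<in> orth J HH}" by blast
    qed
  next
    show "{x + y | x y. x \<in> closure (FF \<inter> HH) \<and> y \<in> orth J HH} \<subseteq> closure FF"
    proof
      fix \<phi> assume "\<phi> \<in> {x + y | x y. x \<in> closure (FF \<inter> HH) \<and> y \<in> orth J HH}"
      then obtain x y where xy: "\<phi> = x + y" "x \<in> closure (FF \<inter> HH)" "y \<in> orth0 HH" using oH by blast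
      have "PP \<phi> = x" using xy cFH by (intro P_unique) auto
      then show "\<phi> \<in> closure FF" using c1 xy by blast
    qed
  qed
  have c3: "orth J FF = orth J (FF \<inter> HH) \<inter> HH"
  proof
    show "orth J FF \<subseteq> orth J (FF \<inter> HH) \<inter> HH" using key oF oFH orth0_anti[of "FF \<inter> HH" FF] by blast
  next
    show "orth J (FF \<inter> HH) \<inter> HH \<subseteq> orth J FF"
    proof
      fix z assume z: "z \<in> orth J (FF \<inter> HH) \<inter> HH"
      have "inner z x = 0" if "x \<in> FF" for x
      proof -
        have "inner z x = inner (PP z) x" using z P_id by simp
        also have "\<dots> = inner z (PP x)" by (rule P_adj)
        also have "\<dots> = 0" using z oFH PFH[OF that] by (auto simp: orth0_def)
        finally show ?thesis .
      qed
      then show "z \<in> orth J FF" using oF by (simp add: orth0_def)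
    qed
  qed
  have c4: "closure FF \<inter> HH = closure (FF \<inter> HH)"
  proof
    show "closure FF \<inter> HH \<subseteq> closure (FF \<inter> HH)" using c1 P_id by auto
    show "closure (FF \<inter> HH) \<subseteq> closure FF \<inter> HH" using cFH closure_mono[of "FF \<inter> HH" FF] by blast
  qed
  show ?thesis using c1 c2 c3 c4 by blast
qed

end
theorem lemma2:
  fixes J :: "'a::{real_inner, complete_space} \<Rightarrow> 'a"
    and S :: "'s set" and \<Gamma> :: "'s \<Rightarrow> 'g set"
    and p :: "'s \<Rightarrow> 'g \<Rightarrow> 'a \<Rightarrow> 'a"
    and A :: "('s \<Rightarrow> 'g) set"
  assumes J: "complex_structure J"
    and countable: "\<And>t. t \<in> S \<Longrightarrow> countable (\<Gamma> t)"
    and proj: "\<And>t a. t \<in> S \<Longrightarrow> a \<in> \<Gamma> t \<Longrightarrow> is_projection J (p t a)"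
    and resolution: "\<And>t \<phi>. t \<in> S \<Longrightarrow> ((\<lambda>a. p t a \<phi>) has_sum \<phi>) (\<Gamma> t)"
    and A: "A \<subseteq> (\<Pi>\<^sub>E t\<in>S. \<Gamma> t)"
  defines "F \<equiv> F_set J p S A" and "H\<pi> \<equiv> H_pi p S \<Gamma>"
  shows "closure F = {\<phi>. proj_onto J H\<pi> \<phi> \<in> closure (F \<inter> H\<pi>)}
       \<and> closure F = {x + y | x y. x \<in> closure (F \<inter> H\<pi>) \<and> y \<in> orth J H\<pi>}
       \<and> orth J F = orth J (F \<inter> H\<pi>) \<inter> H\<pi>
       \<and> closure F \<inter> H\<pi> = closure (F \<inter> H\<pi>)"
  proof -
  interpret l2ctx J S \<Gamma> p A using J proj resolution A by unfold_locales
  have F': "F = FF" by (simp add: F_def FF_def)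
  have H': "H\<pi> = HH" by (simp add: H\<pi>_def HH_def)
  show ?thesis unfolding F' H' proj_PP using main .
qed

end
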